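(* (1) Let $1\le\ell_1\le\dots\le\ell_r\le n$ and $T=C_r\otimes\cdots\otimes C_1$ with $C_i\in B(\varpi_{\ell_i})$. Then $\psi_T=\prod_{i=1}^{r-1}\psi_{C_{i+1}\otimes C_i}$. (2) Let $1\le a\le b\le n$, $F\in B(\varpi_b)$, $E\in B(\varpi_a)$. Then: (a) if $F\otimes E$ is not semistandard then $\psi_{F\otimes E}=0$; (b) if $E=(1,\dots,a)$ and $F\otimes E$ is semistandard then $\psi_{F\otimes E}=1$; (c) if $F\otimes E$ is semistandard and $j\notin E$, $j+1\in E$, then $$\psi_{F\otimes E}=\begin{cases}t\,\psi_{s_jF\otimes s_jE}+(1-t)\,\psi_{F\otimes s_jE}, & \text{if } j\in F,\ j+1\notin F,\\ \psi_{s_jF\otimes s_jE}, &\text{otherwise.}\end{cases}$$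
   Context: Fix $n\ge1$, $[n]=\{1,\dots,n\}$, $\varpi_k=\varepsilon_1+\dots+\varepsilon_k\in\mathbb Z^n$. A column of length $\ell$ is $C=(c_1<\dots<c_\ell)\subseteq[n]$; $B(\varpi_\ell)$ is their set. $s_jC$ is the column whose underlying set is the image of $C$ under the transposition $(j,j+1)$. A tensor $T=C_r\otimes\cdots\otimes C_1$ ($C_i\in B(\varpi_{\ell_i})$, $\ell_1\le\dots\le\ell_r$) is the filling of the Young diagram of $\sum\varpi_{\ell_i}$ with columns $C_r,\dots,C_1$ from left to right (each top to bottom); it is semistandard if entries weakly increase along rows from left to right. Macdonald's $\psi$: for partitions $\mu\subseteq\lambda$ with $\theta=\lambda-\mu$ a horizontal strip ($\lambda_1\ge\mu_1\ge\lambda_2\ge\mu_2\ge\cdots$), let $\theta'_j$ be the number of boxes of $\theta$ in column $j$, $J=\{j\ge1:\theta'_j=0,\ \theta'_{j+1}=1\}$, $m_j(\mu)=\#\{i:\mu_i=j\}$, and $\psi_{\lambda/\mu}=\prod_{j\in J}(1-t^{m_j(\mu)})$. For a semistandard $T$ let $T_{\le i}$ be the shape (partition) formed by the boxes with entries $\le i$, and $\psi_T=\prod_{i=1}^{n-1}\psi_{T_{\le i+1}/T_{\le i}}\in\mathbb Z[t]$. For non-semistandard $T$ set $\psi_T=0$. *)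

theory Defs
  imports "HOL-Computational_Algebra.Polynomial"
begin

definition column :: "nat \<Rightarrow> nat \<Rightarrow> nat set \<Rightarrow> bool" where
  "column n l C \<longleftrightarrow> C \<subseteq> {1..n} \<and> card C = l"

text \<open>The entry of column C in row m (rows numbered from 1, top to bottom).\<close>
definition entry :: "nat set \<Rightarrow> nat \<Rightarrow> nat" where
  "entry C m = sorted_list_of_set C ! (m - 1)"

text \<open>A tensor C_r (x) ... (x) C_1 is represented by the list of its columns
  from left to right, i.e. [C_r, ..., C_1].\<close>
definition tensor :: "nat \<Rightarrow> (nat \<Rightarrow> nat set) \<Rightarrow> nat set list" where
  "tensor r C = map (\<lambda>k. C (r - k)) [0..<r]"

definition semistandard :: "nat set list \<Rightarrow> bool" where
  "semistandard T \<longleftrightarrow>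
     (\<forall>k. Suc k < length T \<longrightarrow> card (T ! Suc k) \<le> card (T ! k) \<and>
        (\<forall>m. 1 \<le> m \<and> m \<le> card (T ! Suc k) \<longrightarrow> entry (T ! k) m \<le> entry (T ! Suc k) m))"

text \<open>Shape T_{<= i}: row m (m >= 1) has as many boxes as there are boxes in row m with
  entries <= i. Partitions are functions from row indices (>= 1) to row lengths.\<close>
definition shape_le :: "nat set list \<Rightarrow> nat \<Rightarrow> nat \<Rightarrow> nat" where
  "shape_le T i m = card {k. k < length T \<and> m \<le> card (T ! k) \<and> entry (T ! k) m \<le> i}"

definition conj_part :: "(nat \<Rightarrow> nat) \<Rightarrow> nat \<Rightarrow> nat" where
  "conj_part lam j = card {i. 1 \<le> i \<and> j \<le> lam i}"

definition mult_part :: "(nat \<Rightarrow> nat) \<Rightarrow> nat \<Rightarrow> nat" where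
  "mult_part mu j = card {i. 1 \<le> i \<and> mu i = j}"

text \<open>Macdonald's psi_{lambda/mu} in Z[t] (t = [:0,1:]).\<close>
definition psi_skew :: "(nat \<Rightarrow> nat) \<Rightarrow> (nat \<Rightarrow> nat) \<Rightarrow> int poly" where
  "psi_skew lam mu =
     (let th = (\<lambda>j. conj_part lam j - conj_part mu j) in
      \<Prod>j \<in> {j. 1 \<le> j \<and> th j = 0 \<and> th (j + 1) = 1}. 1 - [:0, 1:] ^ mult_part mu j)"

definition psiT :: "nat \<Rightarrow> nat set list \<Rightarrow> int poly" where
  "psiT n T = (if semistandard T
      then (\<Prod>i = 1..<n. psi_skew (shape_le T (i + 1)) (shape_le T i))
      else 0)"

definition sj :: "nat \<Rightarrow> nat set \<Rightarrow> nat set" where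
  "sj j C = (\<lambda>x. if x = j then j + 1 else if x = j + 1 then j else x) ` C"

end

theory Submission
  imports Defs
begin



definition cnt :: "nat set \<Rightarrow> nat \<Rightarrow> nat" where "cnt C i = card {x\<in>C. x \<le> i}"

lemma sorted_nth_le_iff:
  "sorted xs \<Longrightarrow> q < length xs \<Longrightarrow> (xs!q \<le> (i::nat) \<longleftrightarrow> q < length (filter (\<lambda>x. x \<le> i) xs))"
proof (induction xs arbitrary: q)
  case Nil then show ?case by simp
next
  case (Cons x xs)
  have allgt: "x > i \<Longrightarrow> filter (\<lambda>x. x \<le> i) xs = []"
    using Cons.prems(1) by (auto simp: filter_empty_conv)
  show ?case
  proof (cases q)
    case 0 then show ?thesis using allgt by auto
  next
    case (Suc q')
    have s: "sorted xs" using Cons.prems(1) by simp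
    have q': "q' < length xs" using Cons.prems(2) Suc by simp
    show ?thesis
    proof (cases "x \<le> i")
      case True then show ?thesis using Cons.IH[OF s q'] Suc by simp
    next
      case False
      have "xs!q' \<ge> x" using Cons.prems(1) q' by (simp add: sorted_wrt_nth_less)
      then show ?thesis using False allgt Suc by simp
    qed
  qed
qed

lemma entry_le_iff:
  assumes "finite C" "q < card C"
  shows "entry C (Suc q) \<le> i \<longleftrightarrow> q < cnt C i"
proof -
  let ?xs = "sorted_list_of_set C"
  have "cnt C i = length (filter (\<lambda>x. x \<le> i) ?xs)"
    unfolding cnt_def using assms(1) by (simp add: distinct_length_filter Int_def conj_commute)
  moreover have "entry C (Suc q) = ?xs ! q" by (simp add: entry_def)
  ultimately show ?thesis using sorted_nth_le_iff[of ?xs q i] assms by simp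
qed

lemma cnt_le_card: "finite C \<Longrightarrow> cnt C i \<le> card C"
  unfolding cnt_def by (rule card_mono) auto


lemma ss_pair: "semistandard [A,B] \<longleftrightarrow> card B \<le> card A \<and> (\<forall>m. 1 \<le> m \<and> m \<le> card B \<longrightarrow> entry A m \<le> entry B m)"
  unfolding semistandard_def by (auto simp: less_Suc_eq)

lemma ss_list: "semistandard T \<longleftrightarrow> (\<forall>k. Suc k < length T \<longrightarrow> semistandard [T!k, T!Suc k])"
  unfolding ss_pair by (simp add: semistandard_def)

lemma ss_dom:
  assumes "finite A" "finite B" "semistandard [A,B]"
  shows "cnt B i \<le> cnt A i"
proof (cases "cnt B i = 0")
  case True then show ?thesis by simp
next
  case False
  then obtain c where c: "cnt B i = Suc c" by (cases "cnt B i") auto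
  have cB: "c < card B" using cnt_le_card[OF assms(2), of i] c by simp
  have "entry B (Suc c) \<le> i" using entry_le_iff[OF assms(2) cB] c by simp
  moreover have "entry A (Suc c) \<le> entry B (Suc c)" "card B \<le> card A"
    using assms(3) cB unfolding ss_pair by auto
  ultimately have "entry A (Suc c) \<le> i" by simp
  then have "c < cnt A i" using entry_le_iff[OF assms(1)] cB \<open>card B \<le> card A\<close> by simp
  then show ?thesis using c by simp
qed

lemma cnt_big: "finite C \<Longrightarrow> \<forall>x\<in>C. x \<le> i \<Longrightarrow> cnt C i = card C"
  unfolding cnt_def by (rule arg_cong[where f=card]) auto

lemma dom_ss:
  assumes "finite A" "finite B" "\<forall>i. cnt B i \<le> cnt A i"
  shows "semistandard [A,B]"
proof -
  obtain N where N: "\<forall>x\<in>A \<union> B. x \<le> N"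
    using assms(1,2) finite_nat_set_iff_bounded_le by (meson finite_UnI)
  have cardle: "card B \<le> card A"
    using assms(3)[rule_format, of N] cnt_big[OF assms(1), of N] cnt_big[OF assms(2), of N] N by simp
  have "entry A m \<le> entry B m" if "1 \<le> m" "m \<le> card B" for m
  proof -
    define q where "q = m - 1"
    have q: "m = Suc q" using that(1) q_def by simp
    have qB: "q < card B" using q that by simp
    have "q < cnt B (entry B m)" using entry_le_iff[OF assms(2) qB, of "entry B m"] q by simp
    then have "q < cnt A (entry B m)" using assms(3) le_less_trans by (meson less_le_trans)
    then show ?thesis using entry_le_iff[OF assms(1), of q] qB cardle q by simp
  qed
  then show ?thesis unfolding ss_pair using cardle by blast
qed

lemma ss_iff_dom: "finite A \<Longrightarrow> finite B \<Longrightarrow> semistandard [A,B] \<longleftrightarrow> (\<forall>i. cnt B i \<le> cnt A i)"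
  using ss_dom dom_ss by blast




lemma ss_chain:
  assumes ss: "semistandard T" and "k' \<le> k" "k < length T"
  shows "card (T!k) \<le> card (T!k') \<and> (\<forall>m. 1 \<le> m \<and> m \<le> card (T!k) \<longrightarrow> entry (T!k') m \<le> entry (T!k) m)"
  using assms(2,3)
proof (induction k)
  case 0 then show ?case by simp
next
  case (Suc k)
  show ?case
  proof (cases "k' = Suc k")
    case True then show ?thesis by simp
  next
    case False
    then have "k' \<le> k" using Suc.prems by simp
    then have IH: "card (T!k) \<le> card (T!k') \<and> (\<forall>m. 1 \<le> m \<and> m \<le> card (T!k) \<longrightarrow> entry (T!k') m \<le> entry (T!k) m)"
      using Suc by simp
    have st: "card (T!Suc k) \<le> card (T!k) \<and> (\<forall>m. 1 \<le> m \<and> m \<le> card (T!Suc k) \<longrightarrow> entry (T!k) m \<le> entry (T!Suc k) m)"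
      using ss Suc.prems(2) unfolding semistandard_def by blast
    show ?thesis
    proof (intro conjI allI impI)
      show "card (T ! Suc k) \<le> card (T ! k')" using IH st by linarith
    next
      fix m assume m: "1 \<le> m \<and> m \<le> card (T ! Suc k)"
      then have "entry (T!k) m \<le> entry (T!Suc k) m" using st by blast
      moreover have "entry (T!k') m \<le> entry (T!k) m" using IH st m by auto
      ultimately show "entry (T!k') m \<le> entry (T!Suc k) m" by linarith
    qed
  qed
qed

lemma downclosed_mem:
  assumes "finite S" "\<And>k k'. k \<in> S \<Longrightarrow> k' \<le> k \<Longrightarrow> k' \<in> S"
  shows "k \<in> S \<longleftrightarrow> k < card S"
proof
  assume "k \<in> S"
  then have "{..k} \<subseteq> S" using assms(2) by auto
  then have "card {..k} \<le> card S" using assms(1) by (rule card_mono[rotated])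
  then show "k < card S" by simp
next
  assume k: "k < card S"
  show "k \<in> S"
  proof (rule ccontr)
    assume "k \<notin> S"
    then have "S \<subseteq> {..<k}" using assms(2) by (meson lessThan_iff not_le subsetI)
    then have "card S \<le> k" using card_mono[of "{..<k}" S] by simp
    then show False using k by simp
  qed
qed

definition Sset :: "nat set list \<Rightarrow> nat \<Rightarrow> nat \<Rightarrow> nat set" where
  "Sset T i m = {k. k < length T \<and> m \<le> card (T ! k) \<and> entry (T ! k) m \<le> i}"

lemma shape_mem:
  assumes ss: "semistandard T" and m: "1 \<le> m"
  shows "k \<in> Sset T i m \<longleftrightarrow> k < shape_le T i m"
proof -
  have "finite (Sset T i m)" unfolding Sset_def by simp
  moreover have "k' \<in> Sset T i m" if "k \<in> Sset T i m" "k' \<le> k" for k k'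
  proof -
    have k: "k < length T" "m \<le> card (T!k)" "entry (T!k) m \<le> i" using that(1) unfolding Sset_def by auto
    from ss_chain[OF ss that(2) k(1)] k m have "m \<le> card (T!k')" "entry (T!k') m \<le> i" by auto
    then show ?thesis using k(1) that(2) unfolding Sset_def by simp
  qed
  ultimately show ?thesis unfolding shape_le_def Sset_def[symmetric] by (rule downclosed_mem)
qed

lemma conj_shape:
  assumes ss: "semistandard T" and fin: "\<forall>k<length T. finite (T!k)"
  shows "conj_part (shape_le T i) j = (if 1 \<le> j \<and> j \<le> length T then cnt (T!(j-1)) i else 0)"
proof (cases "j = 0")
  case True
  then show ?thesis unfolding conj_part_def by (simp add: infinite_Ici[unfolded atLeast_def])
next
  case False
  then obtain p where p: "j = Suc p" by (cases j) auto
  have eq: "{m. 1 \<le> m \<and> j \<le> shape_le T i m} = {m. 1 \<le> m \<and> p < length T \<and> m \<le> card (T ! p) \<and> entry (T ! p) m \<le> i}"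
    using shape_mem[OF ss, of _ p i] p unfolding Sset_def by (auto simp: Suc_le_eq)
  show ?thesis
  proof (cases "p < length T")
    case False then show ?thesis unfolding conj_part_def eq using p by simp
  next
    case True
    have fp: "finite (T!p)" using fin True by simp
    have "{m. 1 \<le> m \<and> p < length T \<and> m \<le> card (T ! p) \<and> entry (T ! p) m \<le> i} = Suc ` {..<cnt (T!p) i}"
    proof (rule set_eqI, rule iffI)
      fix m assume "m \<in> {m. 1 \<le> m \<and> p < length T \<and> m \<le> card (T ! p) \<and> entry (T ! p) m \<le> i}"
      then have m: "1 \<le> m" "m \<le> card (T!p)" "entry (T!p) m \<le> i" by auto
      define q where "q = m - 1"
      have q: "m = Suc q" using m(1) q_def by simp
      then show "m \<in> Suc ` {..<cnt (T!p) i}" using entry_le_iff[OF fp, of q i] m by auto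
    next
      fix m assume "m \<in> Suc ` {..<cnt (T!p) i}"
      then obtain q where q: "m = Suc q" "q < cnt (T!p) i" by auto
      have "q < card (T!p)" using q(2) cnt_le_card[OF fp, of i] by simp
      then show "m \<in> {m. 1 \<le> m \<and> p < length T \<and> m \<le> card (T ! p) \<and> entry (T ! p) m \<le> i}"
        using entry_le_iff[OF fp, of q i] q True by simp
    qed
    then show ?thesis unfolding conj_part_def eq using p True by (simp add: card_image)
  qed
qed

lemma mult_conj:
  assumes "1 \<le> j" "finite {m. 1 \<le> m \<and> j \<le> mu m}"
  shows "mult_part mu j = conj_part mu j - conj_part mu (Suc j)"
proof -
  have "{m. 1 \<le> m \<and> mu m = j} = {m. 1 \<le> m \<and> j \<le> mu m} - {m. 1 \<le> m \<and> Suc j \<le> mu m}" by auto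
  moreover have "{m. 1 \<le> m \<and> Suc j \<le> mu m} \<subseteq> {m. 1 \<le> m \<and> j \<le> mu m}" by auto
  moreover have "finite {m. 1 \<le> m \<and> Suc j \<le> mu m}" using assms(2) calculation(2) finite_subset by blast
  ultimately show ?thesis unfolding mult_part_def conj_part_def by (simp add: card_Diff_subset)
qed

lemma shape_fin:
  assumes ss: "semistandard T" and "1 \<le> j"
  shows "finite {m. 1 \<le> m \<and> j \<le> shape_le T i m}"
proof -
  have "{m. 1 \<le> m \<and> j \<le> shape_le T i m} \<subseteq> {..card (T!(j-1))}"
  proof
    fix m assume "m \<in> {m. 1 \<le> m \<and> j \<le> shape_le T i m}"
    then have "1 \<le> m" "j - 1 < shape_le T i m" using assms(2) by auto
    then have "j - 1 \<in> Sset T i m" using shape_mem[OF ss] by blast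
    then show "m \<in> {..card (T!(j-1))}" unfolding Sset_def by auto
  qed
  then show ?thesis using finite_subset by blast
qed

lemma cnt_Suc: "finite C \<Longrightarrow> cnt C (Suc i) = cnt C i + (if Suc i \<in> C then 1 else 0)"
proof -
  assume f: "finite C"
  have "{x\<in>C. x \<le> Suc i} = {x\<in>C. x \<le> i} \<union> (if Suc i \<in> C then {Suc i} else {})" by (auto simp: le_Suc_eq)
  then show ?thesis unfolding cnt_def using f by (auto simp: card_insert_if)
qed




definition gf :: "nat set \<Rightarrow> nat set \<Rightarrow> nat \<Rightarrow> int poly" where
  "gf A B i = (if Suc i \<notin> A \<and> Suc i \<in> B then 1 - [:0,1:] ^ (cnt A i - cnt B i) else 1)"

lemma psi_skew_formula:
  assumes ss: "semistandard T" and fin: "\<forall>k<length T. finite (T!k)"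
  shows "psi_skew (shape_le T (i+1)) (shape_le T i) = (\<Prod>p<length T - 1. gf (T!p) (T!Suc p) i)"
proof -
  let ?L = "length T"
  let ?th = "\<lambda>j. conj_part (shape_le T (i+1)) j - conj_part (shape_le T i) j"
  have th: "?th j = (if 1 \<le> j \<and> j \<le> ?L \<and> Suc i \<in> T!(j-1) then 1 else 0)" for j
  proof (cases "1 \<le> j \<and> j \<le> ?L")
    case True
    then have "j - 1 < ?L" by linarith
    then have "finite (T!(j-1))" using fin by blast
    then show ?thesis using True by (simp add: conj_shape[OF ss fin] cnt_Suc)
  next
    case False then show ?thesis by (auto simp: conj_shape[OF ss fin])
  qed
  define P where "P = {p. p < ?L - 1 \<and> Suc i \<notin> T!p \<and> Suc i \<in> T!Suc p}"
  have J: "{j. 1 \<le> j \<and> ?th j = 0 \<and> ?th (j + 1) = 1} = Suc ` P"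
  proof (rule set_eqI, rule iffI)
    fix j assume "j \<in> {j. 1 \<le> j \<and> ?th j = 0 \<and> ?th (j + 1) = 1}"
    then have j: "1 \<le> j" "?th j = 0" "?th (j+1) = 1" by auto
    define p where "p = j - 1"
    have jp: "j = Suc p" using j(1) p_def by simp
    show "j \<in> Suc ` P" using j jp unfolding th P_def by (auto split: if_splits)
  next
    fix j assume "j \<in> Suc ` P"
    then obtain p where "j = Suc p" "p \<in> P" by auto
    then show "j \<in> {j. 1 \<le> j \<and> ?th j = 0 \<and> ?th (j + 1) = 1}" unfolding th P_def by auto
  qed
  have mult: "mult_part (shape_le T i) (Suc p) = cnt (T!p) i - cnt (T!Suc p) i" if "p \<in> P" for p
  proof -
    have "p < ?L - 1" using that P_def by simp
    then show ?thesis
      using mult_conj[of "Suc p" "shape_le T i", OF _ shape_fin[OF ss]] conj_shape[OF ss fin] by simp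
  qed
  have "psi_skew (shape_le T (i+1)) (shape_le T i) = (\<Prod>j\<in>Suc ` P. 1 - [:0,1:] ^ mult_part (shape_le T i) j)"
    unfolding psi_skew_def Let_def J by simp
  also have "\<dots> = (\<Prod>p\<in>P. 1 - [:0,1:] ^ (cnt (T!p) i - cnt (T!Suc p) i))"
    by (simp add: prod.reindex mult)
  also have "\<dots> = (\<Prod>p<?L - 1. gf (T!p) (T!Suc p) i)"
    unfolding P_def gf_def by (simp add: prod.If_cases Int_def conj_commute)
  finally show ?thesis .
qed

lemma psiT_formula:
  assumes fin: "\<forall>k<length T. finite (T!k)"
  shows "psiT n T = (if semistandard T then (\<Prod>i=1..<n. \<Prod>p<length T - 1. gf (T!p) (T!Suc p) i) else 0)"
  unfolding psiT_def using psi_skew_formula[OF _ fin] by simp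

lemma psiT_pair:
  assumes "finite A" "finite B"
  shows "psiT n [A,B] = (if semistandard [A,B] then (\<Prod>i=1..<n. gf A B i) else 0)"
  using psiT_formula[of "[A,B]" n] assms by (simp add: less_Suc_eq)




lemma tensor_len: "length (tensor r C) = r" unfolding tensor_def by simp
lemma tensor_nth: "p < r \<Longrightarrow> tensor r C ! p = C (r - p)" unfolding tensor_def by simp

lemma reidx: "(\<Prod>p<r-1. h (r - Suc p)) = (\<Prod>q=1..<r. (h q :: 'a::comm_monoid_mult))"
  by (rule prod.reindex_bij_witness[of _ "\<lambda>q. r - Suc q" "\<lambda>p. r - Suc p"]) auto

lemma part1:
  assumes r: "1 \<le> r" and fin: "\<forall>i\<in>{1..r}. finite (C i)"
  shows "psiT n (tensor r C) = (\<Prod>i = 1..<r. psiT n [C (i + 1), C i])"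
proof -
  let ?T = "tensor r C"
  have finT: "\<forall>k<length ?T. finite (?T!k)" using fin by (simp add: tensor_len tensor_nth)
  have finC: "finite (C q)" if "1 \<le> q" "q \<le> r" for q using fin that by simp
  have pair: "psiT n [C (q + 1), C q] = (if semistandard [C (q+1), C q] then (\<Prod>i=1..<n. gf (C (q+1)) (C q) i) else 0)"
    if "q \<in> {1..<r}" for q using psiT_pair finC that by simp
  have ssT: "semistandard ?T \<longleftrightarrow> (\<forall>q\<in>{1..<r}. semistandard [C (q+1), C q])"
  proof -
    have "semistandard ?T \<longleftrightarrow> (\<forall>k. Suc k < r \<longrightarrow> semistandard [C (Suc (r - Suc k)), C (r - Suc k)])"
    proof -
      have "[?T!k, ?T!Suc k] = [C (Suc (r - Suc k)), C (r - Suc k)]" if "Suc k < r" for k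
        using that by (simp add: tensor_nth Suc_diff_Suc)
      then show ?thesis by (subst ss_list) (simp add: tensor_len)
    qed
    also have "\<dots> \<longleftrightarrow> (\<forall>q\<in>{1..<r}. semistandard [C (q+1), C q])"
    proof
      assume a: "\<forall>k. Suc k < r \<longrightarrow> semistandard [C (Suc (r - Suc k)), C (r - Suc k)]"
      show "\<forall>q\<in>{1..<r}. semistandard [C (q+1), C q]"
      proof
        fix q assume q: "q \<in> {1..<r}"
        then have 1: "Suc (r - Suc q) < r" and 2: "Suc (r - Suc (r - Suc q)) = q + 1" and 3: "r - Suc (r - Suc q) = q" by auto
        have "semistandard [C (Suc (r - Suc (r - Suc q))), C (r - Suc (r - Suc q))]" using a 1 by blast
        then show "semistandard [C (q+1), C q]" unfolding 2 3 by simp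
      qed
    next
      assume "\<forall>q\<in>{1..<r}. semistandard [C (q+1), C q]"
      then have b: "\<And>q. 1 \<le> q \<Longrightarrow> q < r \<Longrightarrow> semistandard [C (q+1), C q]" by simp
      show "\<forall>k. Suc k < r \<longrightarrow> semistandard [C (Suc (r - Suc k)), C (r - Suc k)]"
      proof (intro allI impI)
        fix k assume k: "Suc k < r"
        have "1 \<le> r - Suc k" "r - Suc k < r" using k by simp_all
        from b[OF this] show "semistandard [C (Suc (r - Suc k)), C (r - Suc k)]" by simp
      qed
    qed
    finally show ?thesis .
  qed
  show ?thesis
  proof (cases "semistandard ?T")
    case True
    have "psiT n ?T = (\<Prod>i=1..<n. \<Prod>p<r - 1. gf (C (r - p)) (C (r - Suc p)) i)"
      using psiT_formula[OF finT, of n] True by (simp add: tensor_len tensor_nth)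
    also have "\<dots> = (\<Prod>p<r - 1. \<Prod>i=1..<n. gf (C (Suc (r - Suc p))) (C (r - Suc p)) i)"
      by (subst prod.swap) (intro prod.cong refl, simp add: Suc_diff_Suc)
    also have "\<dots> = (\<Prod>q=1..<r. \<Prod>i=1..<n. gf (C (Suc q)) (C q) i)"
      by (rule reidx)
    also have "\<dots> = (\<Prod>q=1..<r. psiT n [C (q + 1), C q])"
      using True ssT pair by (intro prod.cong refl) simp
    finally show ?thesis .
  next
    case False
    then obtain q where q: "q \<in> {1..<r}" "\<not> semistandard [C (q+1), C q]" using ssT by blast
    then have "psiT n [C (q + 1), C q] = 0" using pair by simp
    then have "(\<Prod>i = 1..<r. psiT n [C (i + 1), C i]) = 0"
      using q(1) by (subst prod_zero_iff) auto
    moreover have "psiT n ?T = 0" using False by (simp add: psiT_def)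
    ultimately show ?thesis by simp
  qed
qed




definition sw :: "nat \<Rightarrow> nat \<Rightarrow> nat" where
  "sw j x = (if x = j then j + 1 else if x = j + 1 then j else x)"

lemma sj_sw: "sj j C = sw j ` C" unfolding sj_def sw_def by simp

lemma sw_sw[simp]: "sw j (sw j x) = x" unfolding sw_def by auto

lemma inj_sw: "inj (sw j)" by (rule inj_on_inverseI[where g="sw j"]) simp

lemma sj_mem: "x \<in> sj j C \<longleftrightarrow> sw j x \<in> C"
  unfolding sj_sw
proof
  assume "x \<in> sw j ` C" then obtain y where "y \<in> C" "x = sw j y" by auto
  then show "sw j x \<in> C" by simp
next
  assume "sw j x \<in> C"
  then have "sw j (sw j x) \<in> sw j ` C" by (rule imageI)
  then show "x \<in> sw j ` C" by simp
qed

lemma finite_sj: "finite C \<Longrightarrow> finite (sj j C)" unfolding sj_sw by simp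

lemma cnt_sj_gen: "cnt (sj j C) i = card {x\<in>C. sw j x \<le> i}"
proof -
  have "{x\<in>sj j C. x \<le> i} = sw j ` {x\<in>C. sw j x \<le> i}"
    unfolding sj_sw by (auto simp: image_iff)
  then show ?thesis unfolding cnt_def by (simp add: card_image inj_on_subset[OF inj_sw])
qed

lemma cnt_sj_other: "i \<noteq> j \<Longrightarrow> cnt (sj j C) i = cnt C i"
proof -
  assume "i \<noteq> j"
  then have "{x\<in>C. sw j x \<le> i} = {x\<in>C. x \<le> i}" unfolding sw_def by auto
  then show ?thesis using cnt_sj_gen[of j C i] by (simp add: cnt_def)
qed

lemma cnt_sj_j:
  assumes "finite C" "1 \<le> j"
  shows "cnt (sj j C) j = cnt C (j - 1) + (if j + 1 \<in> C then 1 else 0)"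
proof -
  have "{x\<in>C. sw j x \<le> j} = {x\<in>C. x \<le> j - 1} \<union> (if j + 1 \<in> C then {j+1} else {})"
    using assms(2) unfolding sw_def by auto
  then show ?thesis using cnt_sj_gen[of j C j] assms(1) by (auto simp: card_insert_if cnt_def)
qed

lemma cnt_pred: "finite C \<Longrightarrow> 1 \<le> j \<Longrightarrow> cnt C j = cnt C (j - 1) + (if j \<in> C then 1 else 0)"
  using cnt_Suc[of C "j - 1"] by simp

lemma cnt_zero: "0 \<notin> C \<Longrightarrow> cnt C 0 = 0"
proof -
  assume "0 \<notin> C"
  then have "{x\<in>C. x \<le> 0} = {}" by auto
  then show ?thesis unfolding cnt_def by simp
qed

lemma gf_cong:
  "(Suc i \<in> X \<longleftrightarrow> Suc i \<in> X') \<Longrightarrow> cnt X i = cnt X' i \<Longrightarrow>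
   (Suc i \<in> Y \<longleftrightarrow> Suc i \<in> Y') \<Longrightarrow> cnt Y i = cnt Y' i \<Longrightarrow> gf X Y i = gf X' Y' i"
  unfolding gf_def by simp

lemma prod_split:
  fixes j n :: nat
  assumes "1 \<le> j" "j < n"
  shows "(\<Prod>i=1..<n. f i) = (\<Prod>i\<in>{1..<n} - {j - 1, j}. f i) * f j * (if 2 \<le> j then f (j - 1) else (1::'a::comm_monoid_mult))"
proof -
  define R where "R = {1..<n} - {j - 1, j}"
  have finR: "finite R" unfolding R_def by simp
  show ?thesis
  proof (cases "2 \<le> j")
    case True
    have eq: "{1..<n} = insert j (insert (j - 1) R)" using assms True unfolding R_def by auto
    have "j \<notin> insert (j - 1) R" "j - 1 \<notin> R" using True unfolding R_def by auto
    then show ?thesis unfolding R_def[symmetric] eq using True finR by (simp add: mult_ac)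
  next
    case False
    then have "j = 1" using assms by simp
    then have eq: "{1..<n} = insert j R" using assms unfolding R_def by auto
    have jR: "j \<notin> R" unfolding R_def by auto
    have RR: "R - {0, j} = R" "R - {j - 1, j} = R" unfolding R_def by auto
    then show ?thesis unfolding R_def[symmetric] eq using False finR RR jR by (simp add: mult_ac)
  qed
qed


lemma part2c:
  fixes F E :: "nat set" and j n :: nat
  assumes finF: "finite F" and finE: "finite E" and F0: "0 \<notin> F"
    and j1: "1 \<le> j" and jn: "j < n" and ss: "semistandard [F,E]" and jE: "j \<notin> E" and j1E: "j+1 \<in> E"
  shows "psiT n [F,E] = (if j \<in> F \<and> j+1 \<notin> F
           then [:0,1:] * psiT n [sj j F, sj j E] + (1 - [:0,1:]) * psiT n [F, sj j E]
           else psiT n [sj j F, sj j E])"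
proof -
  define t :: "int poly" where "t = [:0,1:]"
  define F' where "F' = sj j F"
  define E' where "E' = sj j E"
  have finF': "finite F'" using finite_sj finF F'_def by auto
  have finE': "finite E'" using finite_sj finE E'_def by auto
  have dom: "\<And>i. cnt E i \<le> cnt F i" using ss_dom[OF finF finE ss] .
  have swj: "sw j j = j + 1" "sw j (j+1) = j" unfolding sw_def by auto
  have swo: "\<And>x. x \<noteq> j \<Longrightarrow> x \<noteq> j + 1 \<Longrightarrow> sw j x = x" unfolding sw_def by auto
  have jj: "Suc (j - 1) = j" using j1 by simp
  define R where "R = {1..<n} - {j - 1, j}"
  define Q where "Q = (\<Prod>i\<in>R. gf F E i)"
  have Rp: "Suc i \<noteq> j \<and> Suc i \<noteq> j + 1 \<and> i \<noteq> j" if "i \<in> R" for i using that unfolding R_def by auto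
  have QF'E': "(\<Prod>i\<in>R. gf F' E' i) = Q" unfolding Q_def
  proof (rule prod.cong[OF refl], rule gf_cong)
    fix i assume i: "i \<in> R"
    show "Suc i \<in> F' \<longleftrightarrow> Suc i \<in> F" "Suc i \<in> E' \<longleftrightarrow> Suc i \<in> E"
      unfolding F'_def E'_def sj_mem using swo Rp[OF i] by auto
    show "cnt F' i = cnt F i" "cnt E' i = cnt E i"
      unfolding F'_def E'_def using cnt_sj_other Rp[OF i] by auto
  qed
  have QFE': "(\<Prod>i\<in>R. gf F E' i) = Q" unfolding Q_def
  proof (rule prod.cong[OF refl], rule gf_cong)
    fix i assume i: "i \<in> R"
    show "Suc i \<in> F \<longleftrightarrow> Suc i \<in> F" "Suc i \<in> E' \<longleftrightarrow> Suc i \<in> E"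
      unfolding E'_def sj_mem using swo Rp[OF i] by auto
    show "cnt F i = cnt F i" "cnt E' i = cnt E i"
      unfolding E'_def using cnt_sj_other Rp[OF i] by auto
  qed
  have split: "(\<Prod>i=1..<n. gf X Y i) = (\<Prod>i\<in>R. gf X Y i) * gf X Y j * (if 2 \<le> j then gf X Y (j - 1) else 1)" for X Y
    unfolding R_def by (rule prod_split[OF j1 jn])
  define a0 where "a0 = cnt F (j - 1)"
  define a1 where "a1 = cnt F j"
  define e0 where "e0 = cnt E (j - 1)"
  define e1 where "e1 = cnt E j"
  have a1: "a1 = a0 + (if j \<in> F then 1 else 0)" unfolding a1_def a0_def using cnt_pred[OF finF j1] .
  have e1: "e1 = e0" unfolding e1_def e0_def using cnt_pred[OF finE j1] jE by simp
  have domj1: "e1 + 1 \<le> a1 + (if j+1 \<in> F then 1 else 0)"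
    using dom[of "Suc j"] cnt_Suc[OF finF, of j] cnt_Suc[OF finE, of j] j1E unfolding a1_def e1_def by simp
  have domj0: "e0 \<le> a0" unfolding e0_def a0_def using dom .
  have cF'j: "cnt F' j = a0 + (if j+1 \<in> F then 1 else 0)" unfolding F'_def a0_def using cnt_sj_j[OF finF j1] .
  have cE'j: "cnt E' j = e0 + 1" unfolding E'_def e0_def using cnt_sj_j[OF finE j1] j1E by simp
  have cF'j0: "cnt F' (j - 1) = a0" unfolding F'_def a0_def using cnt_sj_other j1 by simp
  have cE'j0: "cnt E' (j - 1) = e0" unfolding E'_def e0_def using cnt_sj_other j1 by simp
  have a00: "j = 1 \<Longrightarrow> a0 = 0" unfolding a0_def using cnt_zero[OF F0] by simp
  have ssX: "semistandard [X, Y] \<longleftrightarrow> cnt Y j \<le> cnt X j"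
    if "finite X" "finite Y" "\<And>i. i \<noteq> j \<Longrightarrow> cnt X i = cnt F i \<and> cnt Y i = cnt E i" for X Y
    unfolding ss_iff_dom[OF that(1,2)] using that(3) dom by metis
  have ssF'E': "semistandard [F', E'] \<longleftrightarrow> e0 + 1 \<le> a0 + (if j+1 \<in> F then 1 else 0)"
    using ssX[OF finF' finE'] cF'j cE'j unfolding F'_def E'_def using cnt_sj_other by simp
  have ssFE': "semistandard [F, E'] \<longleftrightarrow> e0 + 1 \<le> a1"
    using ssX[OF finF finE'] cE'j unfolding E'_def a1_def using cnt_sj_other by simp
  have gFEj0: "gf F E (j - 1) = 1" unfolding gf_def jj using jE by simp
  have gFEj: "gf F E j = (if j + 1 \<notin> F then 1 - t ^ (a1 - e1) else 1)"
    unfolding gf_def t_def a1_def e1_def using j1E by simp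
  have gE'j: "gf X E' j = 1" for X unfolding gf_def E'_def sj_mem using swj jE by simp
  have gF'E'j0: "gf F' E' (j - 1) = (if j + 1 \<notin> F then 1 - t ^ (a0 - e0) else 1)"
    unfolding gf_def jj t_def using cF'j0 cE'j0 unfolding F'_def E'_def sj_mem swj using jE j1E by simp
  have gFE'j0: "gf F E' (j - 1) = (if j \<notin> F then 1 - t ^ (a0 - e0) else 1)"
    unfolding gf_def jj t_def a0_def using cE'j0 unfolding E'_def sj_mem swj using jE j1E by simp
  have LHS: "psiT n [F,E] = Q * (if j + 1 \<notin> F then 1 - t ^ (a1 - e1) else 1)"
    using psiT_pair[OF finF finE] ss split[of F E] gFEj0 gFEj unfolding Q_def by simp
  show ?thesis
  proof (cases "j \<in> F \<and> j+1 \<notin> F")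
    case True
    have psiFE': "psiT n [F, E'] = Q"
      using psiT_pair[OF finF finE'] ssFE' split[of F E'] QFE' gE'j gFE'j0 True a1 e1 domj1 by simp
    show ?thesis
    proof (cases "e0 + 1 \<le> a0")
      case True2: True
      then have j2: "2 \<le> j" using a00 j1 by (cases "j = 1") auto
      have psiF'E': "psiT n [F', E'] = Q * (1 - t ^ (a0 - e0))"
        using psiT_pair[OF finF' finE'] ssF'E' split[of F' E'] QF'E' gE'j gF'E'j0 True True2 j2 by simp
      have d: "a1 - e1 = Suc (a0 - e0)" using a1 e1 True True2 by simp
      have "Q * (1 - t ^ Suc (a0 - e0)) = t * (Q * (1 - t ^ (a0 - e0))) + (1 - t) * Q"
        by (simp add: algebra_simps)
      then show ?thesis using LHS psiF'E' psiFE' True d unfolding F'_def E'_def t_def by simp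
    next
      case False2: False
      have psiF'E': "psiT n [F', E'] = 0"
        using psiT_pair[OF finF' finE'] ssF'E' True False2 by simp
      have d: "a1 - e1 = 1" using a1 e1 True False2 domj1 by simp
      show ?thesis using LHS psiF'E' psiFE' True d unfolding F'_def E'_def t_def by (simp add: algebra_simps)
    qed
  next
    case False
    show ?thesis
    proof (cases "j + 1 \<in> F")
      case True
      have psiF'E': "psiT n [F', E'] = Q"
        using psiT_pair[OF finF' finE'] ssF'E' split[of F' E'] QF'E' gE'j gF'E'j0 True domj0 by simp
      show ?thesis using LHS psiF'E' True False unfolding F'_def E'_def by simp
    next
      case False2: False
      then have jF: "j \<notin> F" using False by simp
      have a: "a1 = a0" using a1 jF by simp
      have ge: "e0 + 1 \<le> a0" using domj1 a e1 False2 by simp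
      then have j2: "2 \<le> j" using a00 j1 by (cases "j = 1") auto
      have psiF'E': "psiT n [F', E'] = Q * (1 - t ^ (a0 - e0))"
        using psiT_pair[OF finF' finE'] ssF'E' split[of F' E'] QF'E' gE'j gF'E'j0 False2 ge j2 by simp
      show ?thesis using LHS psiF'E' False False2 a e1 unfolding F'_def E'_def by simp
    qed
  qed
qed


lemma part2b:
  fixes F :: "nat set" and a n :: nat
  assumes finF: "finite F" and F0: "0 \<notin> F" and ss: "semistandard [F, {1..a}]"
  shows "psiT n [F, {1..a}] = 1"
proof -
  have dom: "\<And>i. cnt {1..a} i \<le> cnt F i" using ss_dom[OF finF _ ss] by simp
  have "gf F {1..a} i = 1" for i
  proof (cases "Suc i \<in> {1..a}")
    case True
    have "{x\<in>{1..a}. x \<le> Suc i} = {1..Suc i}" using True by auto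
    then have "cnt {1..a} (Suc i) = Suc i" unfolding cnt_def by simp
    then have c: "card {1..Suc i} \<le> card {x\<in>F. x \<le> Suc i}" using dom[of "Suc i"] unfolding cnt_def by simp
    have sub: "{x\<in>F. x \<le> Suc i} \<subseteq> {1..Suc i}" using F0 by (auto simp: Suc_le_eq) (metis gr0I)
    have "{x\<in>F. x \<le> Suc i} = {1..Suc i}" using card_seteq[OF _ sub c] by simp
    then have "Suc i \<in> F" by auto
    then show ?thesis unfolding gf_def by simp
  next
    case False then show ?thesis unfolding gf_def by simp
  qed
  then show ?thesis using psiT_pair[OF finF, of "{1..a}" n] ss by simp
qed

lemma column_fin: "column n l C \<Longrightarrow> finite C" unfolding column_def using finite_subset by blast
lemma column_0: "column n l C \<Longrightarrow> 0 \<notin> C" unfolding column_def by auto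

theorem proposition4p1:
  fixes n :: nat
  shows "(\<forall>(r::nat) (l::nat \<Rightarrow> nat) (C::nat \<Rightarrow> nat set).
            1 \<le> r \<and> (\<forall>i\<in>{1..r}. 1 \<le> l i \<and> l i \<le> n \<and> column n (l i) (C i)) \<and>
            (\<forall>i. 1 \<le> i \<and> i < r \<longrightarrow> l i \<le> l (i + 1)) \<longrightarrow>
            psiT n (tensor r C) = (\<Prod>i = 1..<r. psiT n [C (i + 1), C i]))
       \<and> (\<forall>(a::nat) (b::nat) (F::nat set) (E::nat set).
            1 \<le> a \<and> a \<le> b \<and> b \<le> n \<and> column n b F \<and> column n a E \<longrightarrow>
              (\<not> semistandard [F, E] \<longrightarrow> psiT n [F, E] = 0)
            \<and> (E = {1..a} \<and> semistandard [F, E] \<longrightarrow> psiT n [F, E] = 1)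
            \<and> (\<forall>j::nat. 1 \<le> j \<and> j < n \<and> semistandard [F, E] \<and> j \<notin> E \<and> j + 1 \<in> E \<longrightarrow>
                 psiT n [F, E] =
                   (if j \<in> F \<and> j + 1 \<notin> F
                    then [:0, 1:] * psiT n [sj j F, sj j E] + (1 - [:0, 1:]) * psiT n [F, sj j E]
                    else psiT n [sj j F, sj j E])))"
proof (intro conjI allI impI)
  fix r :: nat and l :: "nat \<Rightarrow> nat" and C :: "nat \<Rightarrow> nat set"
  assume h: "1 \<le> r \<and> (\<forall>i\<in>{1..r}. 1 \<le> l i \<and> l i \<le> n \<and> column n (l i) (C i)) \<and>
            (\<forall>i. 1 \<le> i \<and> i < r \<longrightarrow> l i \<le> l (i + 1))"
  then have "\<forall>i\<in>{1..r}. finite (C i)" using column_fin by blast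
  then show "psiT n (tensor r C) = (\<Prod>i = 1..<r. psiT n [C (i + 1), C i])"
    using part1 h by blast
next
  fix a b :: nat and F E :: "nat set"
  assume h: "1 \<le> a \<and> a \<le> b \<and> b \<le> n \<and> column n b F \<and> column n a E"
  then have finF: "finite F" and finE: "finite E" and F0: "0 \<notin> F"
    using column_fin column_0 by blast+
  show "\<not> semistandard [F, E] \<Longrightarrow> psiT n [F, E] = 0" unfolding psiT_def by simp
  show "E = {1..a} \<and> semistandard [F, E] \<Longrightarrow> psiT n [F, E] = 1" using part2b finF F0 by blast
  fix j :: nat
  assume "1 \<le> j \<and> j < n \<and> semistandard [F, E] \<and> j \<notin> E \<and> j + 1 \<in> E"
  then show "psiT n [F, E] =
                   (if j \<in> F \<and> j + 1 \<notin> F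
                    then [:0, 1:] * psiT n [sj j F, sj j E] + (1 - [:0, 1:]) * psiT n [F, sj j E]
                    else psiT n [sj j F, sj j E])"
    using part2c[OF finF finE F0] by blast
qed



end
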